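(* A ring $R$ is 2-primal if and only if $\beta(R)=E_R(0)$.
   Context: Rings are associative with identity. $\beta(R)$ is the prime radical of $R$ (intersection of all prime ideals). $R$ is 2-primal if the set $\mathcal N(R)$ of nilpotent elements of $R$ equals $\beta(R)$. $E_R(0)=\{ab : a,b\in R,\ a^kb=0 \text{ for some } k\in\mathbb N\}$ (the envelope of the zero submodule of the left module ${}_RR$). *)

theory Defs
  imports Main
begin

definition two_sided_ideal :: "'a::ring_1 set \<Rightarrow> bool" where
  "two_sided_ideal I \<longleftrightarrow> 0 \<in> I \<and> (\<forall>x\<in>I. \<forall>y\<in>I. x - y \<in> I)
     \<and> (\<forall>x\<in>I. \<forall>r. r * x \<in> I \<and> x * r \<in> I)"

definition prime_ideal :: "'a::ring_1 set \<Rightarrow> bool" where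
  "prime_ideal P \<longleftrightarrow> two_sided_ideal P \<and> P \<noteq> UNIV
     \<and> (\<forall>a b. (\<forall>r. a * r * b \<in> P) \<longrightarrow> a \<in> P \<or> b \<in> P)"

definition prime_radical :: "'a::ring_1 set" where
  "prime_radical = \<Inter> {P. prime_ideal P}"

definition nilpotents :: "'a::ring_1 set" where
  "nilpotents = {x. \<exists>n::nat. x ^ n = 0}"

definition two_primal :: "'a::ring_1 itself \<Rightarrow> bool" where
  "two_primal _ \<longleftrightarrow> (nilpotents :: 'a set) = prime_radical"

definition envelope_zero :: "'a::ring_1 set" where
  "envelope_zero = {a * b | a b. \<exists>k::nat. k \<ge> 1 \<and> a ^ k * b = 0}"

end

theory Submission
  imports Defs
begin

lemma ideal_ops:
  assumes "two_sided_ideal I"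
  shows "0 \<in> I" "x \<in> I \<Longrightarrow> y \<in> I \<Longrightarrow> x - y \<in> I"
    "x \<in> I \<Longrightarrow> r * x \<in> I" "x \<in> I \<Longrightarrow> x * r \<in> I"
  using assms unfolding two_sided_ideal_def by auto

lemma ideal_Inter:
  assumes "\<And>I. I \<in> S \<Longrightarrow> two_sided_ideal (I::'a::ring_1 set)"
  shows "two_sided_ideal (\<Inter>S)"
  using assms unfolding two_sided_ideal_def by blast

lemma prime_radical_ideal: "two_sided_ideal (prime_radical :: 'a::ring_1 set)"
  unfolding prime_radical_def
  by (rule ideal_Inter) (simp add: prime_ideal_def)

lemma nil_sub_env: "(nilpotents :: 'a::ring_1 set) \<subseteq> envelope_zero"
proof
  fix x :: 'a assume "x \<in> nilpotents"
  then obtain n where n: "x ^ n = 0" by (auto simp: nilpotents_def)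
  have "x ^ Suc n * 1 = 0" using n by (simp add: mult.assoc power_commutes)
  hence "x = x * 1 \<and> (\<exists>k::nat. k \<ge> 1 \<and> x ^ k * 1 = 0)" by (intro conjI exI[of _ "Suc n"]) auto
  thus "x \<in> envelope_zero" unfolding envelope_zero_def by blast
qed

locale csp =
  fixes I :: "'a::ring_1 set"
  assumes id: "two_sided_ideal I"
    and sq: "\<And>x. x * x \<in> I \<Longrightarrow> x \<in> I"
begin

lemma swap: "x * y \<in> I \<Longrightarrow> y * x \<in> I"
proof -
  assume h: "x * y \<in> I"
  have "(y * x) * (y * x) = y * (x * y) * x" by (simp add: mult.assoc)
  also have "\<dots> \<in> I" using h id by (simp add: ideal_ops)
  finally show ?thesis by (rule sq)
qed

lemma mid: "x * y \<in> I \<Longrightarrow> x * r * y \<in> I"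
proof -
  assume h: "x * y \<in> I"
  have yx: "y * x \<in> I" using swap h .
  have "(x * r * y) * (x * r * y) = x * r * (y * x) * r * y" by (simp add: mult.assoc)
  also have "\<dots> \<in> I" using yx id by (simp add: ideal_ops)
  finally show ?thesis by (rule sq)
qed

lemma descent: "a ^ Suc k * b \<in> I \<Longrightarrow> a * b \<in> I"
proof (induction k)
  case 0 then show ?case by simp
next
  case (Suc k)
  define c where "c = a ^ Suc k * b"
  have ac: "a * c \<in> I" using Suc.prems by (simp add: c_def mult.assoc)
  have abc: "a * b * c \<in> I" by (rule mid[OF ac])
  have "c * c = a ^ Suc k * b * c" by (simp only: c_def)
  also have "\<dots> = a ^ k * (a * b * c)" by (simp only: power_Suc2 mult.assoc)
  also have "\<dots> \<in> I" using abc id by (simp add: ideal_ops)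
  finally have "c \<in> I" by (rule sq)
  thus ?case using Suc.IH by (simp add: c_def)
qed

end

definition gen :: "'a::ring_1 set \<Rightarrow> 'a set" where
  "gen A = \<Inter>{J. two_sided_ideal J \<and> A \<subseteq> J}"

lemma gen_ideal: "two_sided_ideal (gen A)"
  unfolding gen_def by (rule ideal_Inter) simp

lemma gen_sup: "A \<subseteq> gen A"
  unfolding gen_def by blast

lemma gen_least: "two_sided_ideal J \<Longrightarrow> A \<subseteq> J \<Longrightarrow> gen A \<subseteq> J"
  unfolding gen_def by blast

lemma gen_prod:
  fixes P :: "'a::ring_1 set"
  assumes P: "two_sided_ideal P" and ab: "\<forall>r. a * r * b \<in> P"
    and u: "u \<in> gen (insert a P)" and v: "v \<in> gen (insert b P)"
  shows "u * v \<in> P"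
proof -
  define T where "T = {v. \<forall>r. a * r * v \<in> P}"
  have T: "two_sided_ideal T"
    unfolding two_sided_ideal_def T_def
  proof (intro conjI ballI allI)
    show "0 \<in> {v. \<forall>r. a * r * v \<in> P}" using P by (simp add: ideal_ops)
  next
    fix x y assume x: "x \<in> {v. \<forall>r. a * r * v \<in> P}" and y: "y \<in> {v. \<forall>r. a * r * v \<in> P}"
    show "x - y \<in> {v. \<forall>r. a * r * v \<in> P}"
      using x y ideal_ops(2)[OF P] by (auto simp: right_diff_distrib)
  next
    fix x r assume x: "x \<in> {v. \<forall>r. a * r * v \<in> P}"
    show "r * x \<in> {v. \<forall>r. a * r * v \<in> P}" 
    proof -
      have "\<forall>s. a * s * (r * x) \<in> P"
      proof
        fix s
        have "a * s * (r * x) = a * (s * r) * x" by (simp add: mult.assoc)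
        then show "a * s * (r * x) \<in> P" using x by simp
      qed
      then show ?thesis by simp
    qed
    show "x * r \<in> {v. \<forall>r. a * r * v \<in> P}" using x ideal_ops(4)[OF P] by (auto simp: mult.assoc[symmetric])
  qed
  have "insert b P \<subseteq> T" using ab P by (auto simp: T_def ideal_ops)
  hence gT: "gen (insert b P) \<subseteq> T" using gen_least T by blast
  define U where "U = {u. \<forall>v\<in>gen (insert b P). u * v \<in> P}"
  have U: "two_sided_ideal U"
    unfolding two_sided_ideal_def U_def
  proof (intro conjI ballI allI)
    show "0 \<in> {u. \<forall>v\<in>gen (insert b P). u * v \<in> P}" using P by (simp add: ideal_ops)
  next
    fix x y assume x: "x \<in> {u. \<forall>v\<in>gen (insert b P). u * v \<in> P}" and y: "y \<in> {u. \<forall>v\<in>gen (insert b P). u * v \<in> P}"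
    show "x - y \<in> {u. \<forall>v\<in>gen (insert b P). u * v \<in> P}"
      using x y ideal_ops(2)[OF P] by (auto simp: left_diff_distrib)
  next
    fix x r assume x: "x \<in> {u. \<forall>v\<in>gen (insert b P). u * v \<in> P}"
    show "r * x \<in> {u. \<forall>v\<in>gen (insert b P). u * v \<in> P}" using x ideal_ops(3)[OF P] by (auto simp: mult.assoc)
    show "x * r \<in> {u. \<forall>v\<in>gen (insert b P). u * v \<in> P}"
      using x ideal_ops(3)[OF gen_ideal] by (auto simp: mult.assoc)
  qed
  have "insert a P \<subseteq> U"
  proof
    fix w assume "w \<in> insert a P"
    then show "w \<in> U"
    proof
      assume "w = a"
      then show ?thesis using gT unfolding U_def T_def by (force dest: spec[of _ 1])
    next
      assume "w \<in> P" then show ?thesis using P by (auto simp: U_def ideal_ops)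
    qed
  qed
  hence "gen (insert a P) \<subseteq> U" using gen_least U by blast
  thus ?thesis using u v by (auto simp: U_def)
qed

lemma rad_sub_nil: "(prime_radical :: 'a::ring_1 set) \<subseteq> nilpotents"
proof
  fix x :: 'a assume xr: "x \<in> prime_radical"
  show "x \<in> nilpotents"
  proof (rule ccontr)
    assume nx: "x \<notin> nilpotents"
    hence nz: "\<And>n. x ^ n \<noteq> 0" by (auto simp: nilpotents_def)
    define A where "A = {J :: 'a set. two_sided_ideal J \<and> (\<forall>n. x ^ n \<notin> J)}"
    have "\<forall>C\<in>chains A. \<exists>U\<in>A. \<forall>X\<in>C. X \<subseteq> U"
    proof
      fix C assume C: "C \<in> chains A"
      show "\<exists>U\<in>A. \<forall>X\<in>C. X \<subseteq> U"
      proof (cases "C = {}")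
        case True
        have "{0} \<in> A" using nz by (auto simp: A_def two_sided_ideal_def)
        then show ?thesis using True by blast
      next
        case False
        have CA: "C \<subseteq> A" and ch: "\<forall>X\<in>C. \<forall>Y\<in>C. X \<subseteq> Y \<or> Y \<subseteq> X"
          using C unfolding chains_def chain_subset_def by auto
        have "two_sided_ideal (\<Union>C)"
          unfolding two_sided_ideal_def
        proof (intro conjI ballI allI)
          obtain X where "X \<in> C" using False by blast
          moreover have "two_sided_ideal X" using \<open>X \<in> C\<close> CA by (auto simp: A_def)
          ultimately show "0 \<in> \<Union>C" using ideal_ops(1) by blast
        next
          fix p q assume "p \<in> \<Union>C" "q \<in> \<Union>C"
          then obtain X Y where X: "X \<in> C" "p \<in> X" and Y: "Y \<in> C" "q \<in> Y" by auto
          from ch X Y have "X \<subseteq> Y \<or> Y \<subseteq> X" by blast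
          then show "p - q \<in> \<Union>C"
          proof
            assume "X \<subseteq> Y"
            moreover have "two_sided_ideal Y" using Y CA by (auto simp: A_def)
            ultimately have "p - q \<in> Y" using X Y ideal_ops(2) by blast
            then show ?thesis using Y by blast
          next
            assume "Y \<subseteq> X"
            moreover have "two_sided_ideal X" using X CA by (auto simp: A_def)
            ultimately have "p - q \<in> X" using X Y ideal_ops(2) by blast
            then show ?thesis using X by blast
          qed
        next
          fix p r assume "p \<in> \<Union>C"
          then obtain X where X: "X \<in> C" "p \<in> X" by auto
          moreover have "two_sided_ideal X" using X CA by (auto simp: A_def)
          ultimately have "r * p \<in> X \<and> p * r \<in> X" using ideal_ops(3,4) by blast
          then show "r * p \<in> \<Union>C" using X by blast
        next
          fix p r assume "p \<in> \<Union>C"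
          then obtain X where X: "X \<in> C" "p \<in> X" by auto
          moreover have "two_sided_ideal X" using X CA by (auto simp: A_def)
          ultimately have "p * r \<in> X" using ideal_ops(4) by blast
          then show "p * r \<in> \<Union>C" using X by blast
        qed
        moreover have "\<forall>n. x ^ n \<notin> \<Union>C" using CA by (auto simp: A_def)
        ultimately show ?thesis by (auto simp: A_def)
      qed
    qed
    from Zorn_Lemma2[OF this] obtain P where PA: "P \<in> A" and maxP: "\<forall>X\<in>A. P \<subseteq> X \<longrightarrow> X = P"
      by blast
    have Pi: "two_sided_ideal P" and Px: "\<forall>n. x ^ n \<notin> P" using PA by (auto simp: A_def)
    have meet: "\<exists>n. x ^ n \<in> gen (insert a P)" if "a \<notin> P" for a
    proof (rule ccontr)
      assume "\<not> ?thesis"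
      hence "gen (insert a P) \<in> A" using gen_ideal by (auto simp: A_def)
      moreover have "P \<subseteq> gen (insert a P)" using gen_sup by blast
      ultimately have "gen (insert a P) = P" using maxP by blast
      thus False using gen_sup[of "insert a P"] that by blast
    qed
    have "prime_ideal P"
      unfolding prime_ideal_def
    proof (intro conjI allI impI)
      show "two_sided_ideal P" by (rule Pi)
      show "P \<noteq> UNIV" using Px by blast
    next
      fix a b assume ab: "\<forall>r. a * r * b \<in> P"
      show "a \<in> P \<or> b \<in> P"
      proof (rule ccontr)
        assume "\<not> (a \<in> P \<or> b \<in> P)"
        then obtain m n where m: "x ^ m \<in> gen (insert a P)" and n: "x ^ n \<in> gen (insert b P)"
          using meet by blast
        have "x ^ m * x ^ n \<in> P" by (rule gen_prod[OF Pi ab m n])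
        thus False using Px by (simp add: power_add[symmetric])
      qed
    qed
    hence "x \<in> P" using xr by (auto simp: prime_radical_def)
    thus False using Px spec[of _ 1] by (metis power_one_right)
  qed
qed

theorem theorem4p4:
  shows "two_primal TYPE('a::ring_1) \<longleftrightarrow> (prime_radical :: 'a set) = envelope_zero"
proof
  assume tp: "two_primal TYPE('a::ring_1)"
  hence NB: "(nilpotents :: 'a set) = prime_radical" by (simp add: two_primal_def)
  interpret csp "prime_radical :: 'a set"
  proof
    show "two_sided_ideal (prime_radical :: 'a set)" by (rule prime_radical_ideal)
  next
    fix x :: 'a assume "x * x \<in> prime_radical"
    then obtain n where "(x * x) ^ n = 0" using NB by (auto simp: nilpotents_def)
    hence "x ^ (2 * n) = 0" by (simp add: power_mult power2_eq_square power_commutes)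
    thus "x \<in> prime_radical" using NB by (auto simp: nilpotents_def)
  qed
  have "envelope_zero \<subseteq> (prime_radical :: 'a set)"
  proof
    fix y :: 'a assume "y \<in> envelope_zero"
    then obtain a b k where y: "y = a * b" and k: "k \<ge> 1" "a ^ k * b = 0"
      by (auto simp: envelope_zero_def)
    obtain j where j: "k = Suc j" using k(1) by (cases k) auto
    have "a ^ Suc j * b \<in> prime_radical" using k j ideal_ops(1)[OF prime_radical_ideal] by simp
    thus "y \<in> prime_radical" using descent y by blast
  qed
  thus "(prime_radical :: 'a set) = envelope_zero" using nil_sub_env NB by blast
next
  assume "(prime_radical :: 'a set) = envelope_zero"
  thus "two_primal TYPE('a::ring_1)"
    using nil_sub_env rad_sub_nil unfolding two_primal_def by (metis subset_antisym)
qed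

end
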